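(* Suppose that a $(v,k,\lambda)$-BIBD has a nesting. Then $k\ge 2\lambda+1$.
   Context: A $(v,k,\lambda)$-BIBD is a pair $(X,\mathcal{A})$ where $X$ is a set of $v$ points and $\mathcal{A}$ is a multiset of $k$-subsets of $X$ (blocks) such that every pair of distinct points lies in exactly $\lambda$ blocks; a partial $(v,k,\lambda)$-BIBD is defined the same way except that every pair lies in at most $\lambda$ blocks. A nesting of a $(v,k,\lambda)$-BIBD $(X,\mathcal{A})$ is a map $\phi:\mathcal{A}\to X$ such that $(X,\{A\cup\{\phi(A)\}: A\in\mathcal{A}\})$ (a multiset of blocks) is a partial $(v,k+1,\lambda+1)$-BIBD (in particular $\phi(A)\notin A$). *)

theory Defs
  imports Main
begin

text \<open>Blocks are given as an indexed family B over a finite index set I, so that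
  repeated blocks (the multiset of the paper) are distinct indices.
  The number of blocks containing two points x, y:\<close>

definition pair_count :: "'b set \<Rightarrow> ('b \<Rightarrow> 'a set) \<Rightarrow> 'a \<Rightarrow> 'a \<Rightarrow> nat" where
  "pair_count I B x y = card {i \<in> I. x \<in> B i \<and> y \<in> B i}"

definition is_bibd :: "'a set \<Rightarrow> 'b set \<Rightarrow> ('b \<Rightarrow> 'a set) \<Rightarrow> nat \<Rightarrow> nat \<Rightarrow> nat \<Rightarrow> bool" where
  "is_bibd X I B v k lam \<longleftrightarrow>
     finite X \<and> card X = v \<and> finite I \<and>
     2 \<le> k \<and> k < v \<and> 1 \<le> lam \<and>
     (\<forall>i\<in>I. B i \<subseteq> X \<and> card (B i) = k) \<and>
     (\<forall>x\<in>X. \<forall>y\<in>X. x \<noteq> y \<longrightarrow> pair_count I B x y = lam)"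

definition is_partial_bibd :: "'a set \<Rightarrow> 'b set \<Rightarrow> ('b \<Rightarrow> 'a set) \<Rightarrow> nat \<Rightarrow> nat \<Rightarrow> nat \<Rightarrow> bool" where
  "is_partial_bibd X I B v k lam \<longleftrightarrow>
     finite X \<and> card X = v \<and> finite I \<and>
     (\<forall>i\<in>I. B i \<subseteq> X \<and> card (B i) = k) \<and>
     (\<forall>x\<in>X. \<forall>y\<in>X. x \<noteq> y \<longrightarrow> pair_count I B x y \<le> lam)"

definition is_nesting :: "'a set \<Rightarrow> 'b set \<Rightarrow> ('b \<Rightarrow> 'a set) \<Rightarrow> nat \<Rightarrow> nat \<Rightarrow> nat \<Rightarrow> ('b \<Rightarrow> 'a) \<Rightarrow> bool" where
  "is_nesting X I B v k lam phi \<longleftrightarrow>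
     (\<forall>i\<in>I. phi i \<in> X) \<and>
     is_partial_bibd X I (\<lambda>i. insert (phi i) (B i)) v (k + 1) (lam + 1)"

end

theory Submission
  imports Defs
begin

lemma count_pairs:
  assumes fX: "finite X" and fI: "finite I"
    and C: "\<forall>i\<in>I. C i \<subseteq> X \<and> card (C i) = m"
  shows "(\<Sum>p\<in>{p\<in>X\<times>X. fst p \<noteq> snd p}. pair_count I C (fst p) (snd p)) = card I * (m*m - m)"
proof -
  let ?D = "{p\<in>X\<times>X. fst p \<noteq> snd p}"
  have fD: "finite ?D" using fX by auto
  have "(\<Sum>p\<in>?D. pair_count I C (fst p) (snd p))
      = (\<Sum>p\<in>?D. \<Sum>i\<in>I. if fst p \<in> C i \<and> snd p \<in> C i then 1 else 0)"
    unfolding pair_count_def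
    by (rule sum.cong) (auto simp: sum.inter_filter[OF fI, symmetric])
  also have "\<dots> = (\<Sum>i\<in>I. \<Sum>p\<in>?D. if fst p \<in> C i \<and> snd p \<in> C i then 1 else 0)"
    by (rule sum.swap)
  also have "\<dots> = (\<Sum>i\<in>I. m*m - m)"
  proof (rule sum.cong)
    fix i assume i: "i \<in> I"
    have sub: "C i \<subseteq> X" and cm: "card (C i) = m" using C i by auto
    have fC: "finite (C i)" using sub fX finite_subset by blast
    have "(\<Sum>p\<in>?D. if fst p \<in> C i \<and> snd p \<in> C i then 1 else 0)
        = card {p\<in>?D. fst p \<in> C i \<and> snd p \<in> C i}"
      by (simp add: sum.inter_filter[OF fD, symmetric])
    also have "{p\<in>?D. fst p \<in> C i \<and> snd p \<in> C i} = C i \<times> C i - (\<lambda>x. (x,x)) ` C i"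
      using sub by auto
    also have "card \<dots> = card (C i \<times> C i) - card ((\<lambda>x. (x,x)) ` C i)"
      by (rule card_Diff_subset) (use fC in auto)
    also have "card ((\<lambda>x. (x,x)) ` C i) = m"
      using cm by (simp add: card_image inj_on_def)
    also have "card (C i \<times> C i) = m*m" using cm by (simp add: card_cartesian_product)
    finally show "(\<Sum>p\<in>?D. if fst p \<in> C i \<and> snd p \<in> C i then 1 else 0) = m*m - m" .
  qed simp
  also have "\<dots> = card I * (m*m - m)" by simp
  finally show ?thesis .
qed

theorem mainTheorem3:
  fixes X :: "'a set" and I :: "'b set" and B :: "'b \<Rightarrow> 'a set"
    and v k lam :: nat and phi :: "'b \<Rightarrow> 'a"
  assumes "is_bibd X I B v k lam"
    and "is_nesting X I B v k lam phi"
  shows "k \<ge> 2 * lam + 1"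
proof -
  let ?D = "{p\<in>X\<times>X. fst p \<noteq> snd p}"
  let ?C = "\<lambda>i. insert (phi i) (B i)"
  have fX: "finite X" and cX: "card X = v" and fI: "finite I" and k2: "2 \<le> k"
    and kv: "k < v" and l1: "1 \<le> lam" and Bk: "\<forall>i\<in>I. B i \<subseteq> X \<and> card (B i) = k"
    and pc: "\<forall>x\<in>X. \<forall>y\<in>X. x \<noteq> y \<longrightarrow> pair_count I B x y = lam"
    using assms(1) unfolding is_bibd_def by auto
  have Ck: "\<forall>i\<in>I. ?C i \<subseteq> X \<and> card (?C i) = k+1"
    and pc2: "\<forall>x\<in>X. \<forall>y\<in>X. x \<noteq> y \<longrightarrow> pair_count I ?C x y \<le> lam+1"
    using assms(2) unfolding is_nesting_def is_partial_bibd_def by auto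
  define N where "N = card ?D"
  have "card ?D = card (X \<times> X) - card ((\<lambda>x. (x,x)) ` X)"
  proof -
    have "?D = X \<times> X - (\<lambda>x. (x,x)) ` X" by auto
    then show ?thesis by (simp add: card_Diff_subset fX image_subset_iff)
  qed
  also have "\<dots> = v*v - v" using cX by (simp add: card_image inj_on_def card_cartesian_product)
  finally have N: "N = v*v - v" unfolding N_def .
  have v3: "v \<ge> 3" using kv k2 by simp
  then have "3*v \<le> v*v" by (simp add: mult_le_mono1)
  then have Npos: "N > 0" unfolding N using v3 by simp
  let ?b = "card I"
  have e1: "?b * (k*k - k) = N * lam"
  proof -
    have "?b * (k*k - k) = (\<Sum>p\<in>?D. pair_count I B (fst p) (snd p))"
      using count_pairs[OF fX fI Bk] by simp
    also have "\<dots> = (\<Sum>p\<in>?D. lam)" by (rule sum.cong) (use pc in auto)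
    finally show ?thesis unfolding N_def by simp
  qed
  have e2: "?b * ((k+1)*(k+1) - (k+1)) \<le> N * (lam+1)"
  proof -
    have "?b * ((k+1)*(k+1) - (k+1)) = (\<Sum>p\<in>?D. pair_count I ?C (fst p) (snd p))"
      using count_pairs[OF fX fI Ck] by simp
    also have "\<dots> \<le> (\<Sum>p\<in>?D. lam+1)" by (rule sum_mono) (use pc2 in auto)
    finally show ?thesis unfolding N_def by simp
  qed
  have bpos: "?b > 0" using e1 Npos l1 by (metis mult_is_0 not_gr0 not_one_le_zero)
  have k1: "k*k - k = k*(k-1)" by (simp add: diff_mult_distrib2)
  have k2': "(k+1)*(k+1) - (k+1) = k*(k-1) + 2*k" using k2
    by (cases k) (auto simp: algebra_simps)
  have "?b*(k*(k-1)) + 2*?b*k \<le> N*lam + N"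
    using e2 k2' by (simp add: algebra_simps)
  with e1 k1 have "2*?b*k \<le> N" by simp
  then have "2*?b*k*lam \<le> N*lam" by simp
  also have "\<dots> = ?b*k*(k-1)" using e1 k1 by simp
  finally have "(?b*k) * (2*lam) \<le> (?b*k) * (k-1)" by (simp add: algebra_simps)
  then have "2*lam \<le> k-1" using bpos k2 by simp
  then show ?thesis using k2 by simp
qed

end
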